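(* Let $\mathbf{u}$ be fixed by a primitive substitution $\varphi_w$, $w\in\{a,b,\alpha,\beta\}^*$. (1) If $w\in\{a,\beta\}^*$, then $\sigma(\mathbf{u})$ is a standard Sturmian word which is fixed by the substitution $\varphi_{H(w)}$. (2) If $w\in\{b,\alpha\}^*$, then $\sigma(\mathbf{u})$ is a standard Sturmian word which is fixed by the substitution $\varphi_{F(w)}$. (3) If $w\in\{a,\alpha\}^*$ and $\mathbf{u}$ has prefix $1$, then $\sigma(\mathbf{u})$ is fixed by the substitution $\varphi_{H(w)}$. (4) If $w\in\{a,\alpha\}^*$ and $\mathbf{u}$ has prefix $0$, then $\sigma(\mathbf{u})$ is fixed by the substitution $\varphi_{F(w)}$.
   Context: Morphisms on $\{0,1\}^*$: $\varphi_a: 0\mapsto 0, 1 \mapsto 10$; $\varphi_b: 0 \mapsto 0, 1\mapsto 01$; $\varphi_\alpha: 0\mapsto 01, 1\mapsto 1$; $\varphi_\beta: 0\mapsto 10, 1 \mapsto 1$; for $w=w_0\cdots w_{m-1}$, $\varphi_w = \varphi_{w_0}\circ\cdots\circ\varphi_{w_{m-1}}$. $H, F$ are the monoid morphisms on $\{a,b,\alpha,\beta\}^*$ given by $H(a)=H(b)=b$, $H(\alpha)=\alpha$, $H(\beta)=\beta$, and $F(a)=a$, $F(b)=b$, $F(\alpha)=F(\beta)=\beta$. $\sigma$ is the shift $\sigma(u_0u_1u_2\cdots)=u_1u_2\cdots$. A morphism is primitive if some power maps every letter to a word containing every letter; a substitution is a morphism $\psi$ with a letter $c$, $\psi(c)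 = cx$, $x$ nonempty, $|\psi^n(c)|\to\infty$. A standard Sturmian word is a Sturmian word $\mathbf{s}$ over $\{0,1\}$ such that both $0\mathbf{s}$ and $1\mathbf{s}$ are Sturmian (equivalently, the lower two interval exchange coding with parameters $\ell_0,\ell_1,\rho=\ell_1$: $T$ on $[0,\ell_0+\ell_1)$, $T(x)=x+\ell_1$ on $[0,\ell_0)$ coded $0$, $T(x)=x-\ell_0$ on $[\ell_0,\ell_0+\ell_1)$ coded $1$, orbit of $\rho$). Sturmian words are infinite binary words with exactly $n+1$ factors of length $n$ for each $n$. *)

theory Defs
  imports Main
begin

datatype bin = B0 | B1
datatype gen = Ga | Gb | Galpha | Gbeta

definition ext :: "('x \<Rightarrow> 'y list) \<Rightarrow> 'x list \<Rightarrow> 'y list" where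
  "ext f xs = concat (map f xs)"

fun phi :: "gen \<Rightarrow> bin \<Rightarrow> bin list" where
  "phi Ga B0 = [B0]" | "phi Ga B1 = [B1, B0]"
| "phi Gb B0 = [B0]" | "phi Gb B1 = [B0, B1]"
| "phi Galpha B0 = [B0, B1]" | "phi Galpha B1 = [B1]"
| "phi Gbeta B0 = [B1, B0]" | "phi Gbeta B1 = [B1]"

fun phiw :: "gen list \<Rightarrow> bin \<Rightarrow> bin list" where
  "phiw [] c = [c]"
| "phiw (g # w) c = ext (phi g) (phiw w c)"

fun H :: "gen \<Rightarrow> gen" where
  "H Ga = Gb" | "H Gb = Gb" | "H Galpha = Galpha" | "H Gbeta = Gbeta"

fun F :: "gen \<Rightarrow> gen" where
  "F Ga = Ga" | "F Gb = Gb" | "F Galpha = Gbeta" | "F Gbeta = Gbeta"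

definition primitive :: "('x \<Rightarrow> 'x list) \<Rightarrow> bool" where
  "primitive f \<longleftrightarrow> (\<exists>k. \<forall>c d. d \<in> set ((ext f ^^ k) [c]))"

definition substitution :: "('x \<Rightarrow> 'x list) \<Rightarrow> bool" where
  "substitution f \<longleftrightarrow> (\<exists>c x. f c = c # x \<and> x \<noteq> [] \<and>
      filterlim (\<lambda>n. length ((ext f ^^ n) [c])) at_top sequentially)"

definition pref :: "(nat \<Rightarrow> 'x) \<Rightarrow> nat \<Rightarrow> 'x list" where
  "pref u n = map u [0..<n]"

text \<open>Image of an infinite word under a non-erasing morphism (all morphisms used here
  are non-erasing): the k-th letter of f(u) is the k-th letter of f(u_0 ... u_k).\<close>
definition inf_img :: "('x \<Rightarrow> 'x list) \<Rightarrow> (nat \<Rightarrow> 'x) \<Rightarrow> nat \<Rightarrow> 'x" where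
  "inf_img f u k = ext f (pref u (Suc k)) ! k"

definition fixed_by :: "('x \<Rightarrow> 'x list) \<Rightarrow> (nat \<Rightarrow> 'x) \<Rightarrow> bool" where
  "fixed_by f u \<longleftrightarrow> inf_img f u = u"

definition shift :: "(nat \<Rightarrow> 'x) \<Rightarrow> nat \<Rightarrow> 'x" where
  "shift u n = u (Suc n)"

definition factors :: "(nat \<Rightarrow> 'x) \<Rightarrow> nat \<Rightarrow> 'x list set" where
  "factors u n = {map (\<lambda>i. u (i + k)) [0..<n] | k. True}"

definition sturmian :: "(nat \<Rightarrow> bin) \<Rightarrow> bool" where
  "sturmian u \<longleftrightarrow> (\<forall>n. card (factors u n) = n + 1)"

definition cons_inf :: "'x \<Rightarrow> (nat \<Rightarrow> 'x) \<Rightarrow> nat \<Rightarrow> 'x" where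
  "cons_inf c u n = (case n of 0 \<Rightarrow> c | Suc m \<Rightarrow> u m)"

definition standard_sturmian :: "(nat \<Rightarrow> bin) \<Rightarrow> bool" where
  "standard_sturmian s \<longleftrightarrow> sturmian s \<and> sturmian (cons_inf B0 s) \<and> sturmian (cons_inf B1 s)"

end

theory Submission imports Defs "HOL-Library.Sublist" begin

lemma ext_Nil[simp]: "ext f [] = []" by (simp add: ext_def)
lemma ext_Cons[simp]: "ext f (c # l) = f c @ ext f l" by (simp add: ext_def)
lemma ext_append[simp]: "ext f (a @ b) = ext f a @ ext f b" by (simp add: ext_def)
lemma ext_concat: "ext f (concat L) = concat (map (ext f) L)" by (induct L) auto
lemma ext_comp: "ext (\<lambda>c. ext f (g c)) l = ext f (ext g l)" by (induct l) auto
lemma ext_single: "ext (\<lambda>c. [c]) l = l" by (induct l) auto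

lemma phi_ne[simp]: "phi g c \<noteq> []" by (cases g; cases c) auto
lemma phi_len: "length (phi g c) \<ge> 1" using phi_ne[of g c] by (cases "phi g c") auto
lemma phiw_ne[simp]: "phiw v c \<noteq> []"
  by (induct v arbitrary: c) (auto simp: ext_def)

lemma ext_len: "(\<And>c. f c \<noteq> []) \<Longrightarrow> length (ext f l) \<ge> length l"
proof (induct l)
  case (Cons a l) then show ?case by (cases "f a") auto
qed simp

lemma phiw_Cons_fun: "phiw (g # v) = (\<lambda>c. ext (phi g) (phiw v c))" by auto
lemma phiw_append: "phiw (v1 @ v2) c = ext (phiw v1) (phiw v2 c)"
proof (induct v1 arbitrary: c)
  case Nil then show ?case by (simp add: ext_single[unfolded ext_def] ext_def)
next
  case (Cons g v1) then show ?case by (simp add: ext_comp[symmetric] )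
qed

definition pfx :: "'x list \<Rightarrow> (nat \<Rightarrow> 'x) \<Rightarrow> bool" where
  "pfx w x \<longleftrightarrow> (\<forall>i<length w. x i = w ! i)"
definition fac :: "(nat \<Rightarrow> 'x) \<Rightarrow> 'x list \<Rightarrow> bool" where
  "fac x w \<longleftrightarrow> (\<exists>k. \<forall>i<length w. x (k + i) = w ! i)"

lemma pfx_pref: "pfx w x \<longleftrightarrow> w = pref x (length w)"
proof
  assume "pfx w x" then show "w = pref x (length w)"
    unfolding pfx_def pref_def by (intro nth_equalityI) auto
next
  assume "w = pref x (length w)" then show "pfx w x"
    unfolding pfx_def pref_def by (metis add_0 diff_zero length_map length_upt nth_map nth_upt)
qed
lemma pref_Suc: "pref u (Suc n) = pref u n @ [u n]" by (simp add: pref_def)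
lemma pref_len[simp]: "length (pref u n) = n" by (simp add: pref_def)
lemma pref_add: "pref u (n + m) = pref u n @ map (\<lambda>t. u (n + t)) [0..<m]"
  by (induct m) (auto simp: pref_def)
lemma pref_nth: "i < n \<Longrightarrow> pref u n ! i = u i" by (simp add: pref_def)

lemma img_pfx:
  assumes ne: "\<And>c. f c \<noteq> []"
  shows "pfx (ext f (pref u n)) (inf_img f u)"
  unfolding pfx_def
proof (intro allI impI)
  fix i assume i: "i < length (ext f (pref u n))"
  have l1: "length (ext f (pref u (Suc i))) \<ge> Suc i" using ext_len[OF ne, of "pref u (Suc i)"] by simp
  show "inf_img f u i = ext f (pref u n) ! i"
  proof (cases "Suc i \<le> n")
    case True
    then obtain m where "n = Suc i + m" by (metis le_add_diff_inverse)
    then show ?thesis using l1 unfolding inf_img_def by (simp only: pref_add[of u "Suc i" m] ext_append nth_append) simp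
  next
    case False
    then obtain m where "Suc i = n + m" by (metis le_add_diff_inverse nat_le_linear)
    then show ?thesis using i unfolding inf_img_def by (simp add: pref_add nth_append)
  qed
qed

lemma img_unique:
  assumes ne: "\<And>c. f c \<noteq> []" and h: "\<And>n. pfx (ext f (pref u n)) V"
  shows "V = inf_img f u"
proof
  fix i
  have l1: "length (ext f (pref u (Suc i))) \<ge> Suc i" using ext_len[OF ne, of "pref u (Suc i)"] by simp
  then show "V i = inf_img f u i" using h[of "Suc i"] unfolding pfx_def inf_img_def by auto
qed

lemma img_comp:
  assumes nf: "\<And>c. f c \<noteq> []" and ng: "\<And>c. g c \<noteq> []"
  shows "inf_img (\<lambda>c. ext f (g c)) u = inf_img f (inf_img g u)"
proof -
  have nfg: "\<And>c. ext f (g c) \<noteq> []" using nf ng by (metis ext_Cons ext_Nil append_is_Nil_conv neq_Nil_conv)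
  show ?thesis
  proof (rule img_unique[OF nfg, symmetric])
    fix n
    have "ext g (pref u n) = pref (inf_img g u) (length (ext g (pref u n)))"
      using img_pfx[OF ng, where u=u and n=n] unfolding pfx_pref .
    then have "pfx (ext f (ext g (pref u n))) (inf_img f (inf_img g u))"
      using img_pfx[OF nf, where u="inf_img g u" and n="length (ext g (pref u n))"] by simp
    then show "pfx (ext (\<lambda>c. ext f (g c)) (pref u n)) (inf_img f (inf_img g u))"
      by (simp only: ext_comp)
  qed
qed

lemma fixed_hd: "fixed_by f u \<Longrightarrow> f c \<noteq> [] \<Longrightarrow> c = u 0 \<Longrightarrow> hd (f c) = c"
proof -
  assume a: "fixed_by f u" "f c \<noteq> []" "c = u 0"
  have "u 0 = inf_img f u 0" using a(1) unfolding fixed_by_def by simp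
  also have "\<dots> = ext f (pref u 1) ! 0" unfolding inf_img_def by simp
  also have "pref u 1 = [c]" using a(3) by (simp add: pref_def)
  finally show ?thesis using a by (simp add: hd_conv_nth nth_append)
qed


definition full :: "gen list \<Rightarrow> bool" where
  "full v \<longleftrightarrow> (\<forall>d. \<exists>g\<in>set v. phi g d \<noteq> [d])"

lemma phiw_fix: "(\<forall>g\<in>set w. phi g d = [d]) \<Longrightarrow> phiw w d = [d]"
  by (induct w) auto

lemma funpow_fix: "ext f [d] = [d] \<Longrightarrow> (ext f ^^ k) [d] = [d]"
  by (induct k) auto

lemma bin_other: "\<exists>e::bin. e \<noteq> d" by (cases d) (auto intro: exI[of _ B0] exI[of _ B1])

lemma prim_full: "primitive (phiw w) \<Longrightarrow> full w"
proof (rule ccontr)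
  assume p: "primitive (phiw w)" and nf: "\<not> full w"
  then obtain d where d: "\<forall>g\<in>set w. phi g d = [d]" unfolding full_def by auto
  then have "ext (phiw w) [d] = [d]" using phiw_fix by simp
  then have "\<And>k. (ext (phiw w) ^^ k) [d] = [d]" by (rule funpow_fix)
  moreover obtain e where "e \<noteq> d" using bin_other by blast
  ultimately show False using p unfolding primitive_def by (metis empty_iff list.set(1) set_ConsD)
qed

lemma phiH: "(phi (H g) d = [d]) = (phi g d = [d])" by (cases g; cases d) auto
lemma phiF: "(phi (F g) d = [d]) = (phi g d = [d])" by (cases g; cases d) auto
lemma full_H: "full (map H w) = full w" unfolding full_def using phiH by auto
lemma full_F: "full (map F w) = full w" unfolding full_def using phiF by auto

lemma mem_phi: "d \<in> set (phi g d)" by (cases g; cases d) auto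
lemma set_ext_sub: "set l \<subseteq> set (ext (phi g) l)"
  by (induct l) (use mem_phi in auto)

lemma phiw_len1: "length (phiw v d) = 1 \<Longrightarrow> phiw v d = [d]"
proof (induct v)
  case (Cons g v)
  have "length (phiw v d) \<le> length (phiw (g#v) d)" using ext_len[of "phi g"] by simp
  moreover have "phiw v d \<noteq> []" by simp
  ultimately have "length (phiw v d) = 1" using Cons.prems by (cases "phiw v d") auto
  then have "phiw v d = [d]" using Cons.hyps by simp
  then have "phiw (g#v) d = phi g d" by simp
  with Cons.prems show ?case using mem_phi[of d g] by (cases "phi g d") auto
qed simp

lemma phiw_len2: "\<exists>g\<in>set v. phi g d \<noteq> [d] \<Longrightarrow> length (phiw v d) \<ge> 2"
proof (induct v)
  case (Cons g v)
  show ?case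
  proof (cases "\<exists>g\<in>set v. phi g d \<noteq> [d]")
    case True
    then show ?thesis using Cons.hyps ext_len[of "phi g" "phiw v d"] by simp
  next
    case False
    then have "phiw v d = [d]" using phiw_fix by auto
    with False Cons.prems show ?thesis by (cases g; cases d) auto
  qed
qed simp

lemma phi_both: "phi g d \<noteq> [d] \<Longrightarrow> set (phi g d) = UNIV"
  by (cases g; cases d) (auto intro: bin.exhaust)

lemma phiw_both: "\<exists>g\<in>set v. phi g d \<noteq> [d] \<Longrightarrow> set (phiw v d) = UNIV"
proof (induct v)
  case (Cons g v)
  show ?case
  proof (cases "\<exists>g\<in>set v. phi g d \<noteq> [d]")
    case True
    then show ?thesis using Cons.hyps set_ext_sub[of "phiw v d" g] by auto
  next
    case False
    then have "phiw v d = [d]" using phiw_fix by auto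
    with False Cons.prems show ?thesis using phi_both by auto
  qed
qed simp

lemma funpow_ext_append: fixes f :: "'a \<Rightarrow> 'a list" shows "(ext f ^^ n) (a @ b) = (ext f ^^ n) a @ (ext f ^^ n) b"
proof (induct n)
  case (Suc n)
  then show ?case by simp
qed simp

lemma funpow_len: fixes f :: "'a \<Rightarrow> 'a list" shows "(\<And>c. f c \<noteq> []) \<Longrightarrow> length ((ext f ^^ n) l) \<ge> length l"
proof (induct n)
  case (Suc n)
  then show ?case using ext_len[of f "(ext f ^^ n) l"] by simp
qed simp

lemma subst_grow:
  fixes f :: "'a \<Rightarrow> 'a list"
  assumes ne: "\<And>c. f c \<noteq> []" and fc: "f c = c # r" and r: "r \<noteq> []"
  shows "length ((ext f ^^ n) [c]) \<ge> Suc n"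
proof (induct n)
  case (Suc n)
  have "(ext f ^^ Suc n) [c] = (ext f ^^ n) ([c] @ r)" using fc by (simp add: funpow_Suc_right del: funpow.simps)
  also have "\<dots> = (ext f ^^ n) [c] @ (ext f ^^ n) r" by (rule funpow_ext_append)
  moreover have "length ((ext f ^^ n) r) \<ge> length r" by (rule funpow_len[OF ne])
  ultimately show ?case using Suc r by (cases r) auto
qed simp

lemma full_subst:
  assumes fu: "full v" and fx: "fixed_by (phiw v) x"
  shows "substitution (phiw v)"
proof -
  let ?c = "x 0"
  have h: "hd (phiw v ?c) = ?c" using fixed_hd[OF fx] by simp
  have l: "length (phiw v ?c) \<ge> 2" using phiw_len2 fu unfolding full_def by blast
  obtain r where r: "phiw v ?c = ?c # r" "r \<noteq> []" using h l
    by (cases "phiw v ?c") fastforce+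
  have G: "\<And>n. length ((ext (phiw v) ^^ n) [?c]) \<ge> Suc n" by (rule subst_grow[where f="phiw v", OF phiw_ne r])
  have "filterlim (\<lambda>n. length ((ext (phiw v) ^^ n) [?c])) at_top sequentially"
    unfolding filterlim_at_top
  proof
    fix Z
    show "eventually (\<lambda>n. Z \<le> length ((ext (phiw v) ^^ n) [?c])) sequentially"
    proof (rule eventually_sequentiallyI[of Z])
      fix n assume "Z \<le> n" then show "Z \<le> length ((ext (phiw v) ^^ n) [?c])" using G[of n] by linarith
    qed
  qed
  then show ?thesis unfolding substitution_def using r by blast
qed

lemma shift_img:
  assumes nf: "\<And>c. f c \<noteq> []" and nf': "\<And>c. f' c \<noteq> []"
    and h: "\<And>l. \<exists>t. ext f (c # l) = c # ext f' l @ t"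
    and u0: "u 0 = c" and fx: "fixed_by f u"
  shows "fixed_by f' (shift u)"
  unfolding fixed_by_def
proof (rule img_unique[OF nf', symmetric])
  fix n
  have pu: "pref u (Suc n) = c # pref (shift u) n"
    using u0 by (induct n) (auto simp: pref_def shift_def)
  obtain t where t: "ext f (c # pref (shift u) n) = c # ext f' (pref (shift u) n) @ t" using h by blast
  have "pfx (ext f (pref u (Suc n))) (inf_img f u)" by (rule img_pfx[OF nf])
  then have "pfx (ext f (pref u (Suc n))) u" using fx unfolding fixed_by_def by simp
  then show "pfx (ext f' (pref (shift u) n)) (shift u)"
    unfolding pu t pfx_def shift_def by (auto simp: nth_append)
qed

lemma lift_shift:
  assumes "\<And>g l. g \<in> set w \<Longrightarrow> \<exists>t. ext (phi g) (c # l) = c # ext (phi (G g)) l @ t"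
  shows "\<exists>t. ext (phiw w) (c # l) = c # ext (phiw (map G w)) l @ t"
  using assms
proof (induct w arbitrary: l)
  case Nil then show ?case by (simp add: ext_single[unfolded ext_def] ext_def)
next
  case (Cons g w)
  have pr: "\<And>g' l. g' \<in> set w \<Longrightarrow> \<exists>t. ext (phi g') (c # l) = c # ext (phi (G g')) l @ t"
    using Cons.prems by simp
  obtain t where t: "ext (phiw w) (c # l) = c # ext (phiw (map G w)) l @ t" using Cons.hyps[OF pr] by blast
  have ex: "\<exists>t'. ext (phi g) (c # L) = c # ext (phi (G g)) L @ t'" for L
    using Cons.prems by simp
  obtain t' where t': "ext (phi g) (c # (ext (phiw (map G w)) l @ t)) = c # ext (phi (G g)) (ext (phiw (map G w)) l @ t) @ t'"
    using ex by blast
  have "ext (phiw (g # w)) (c # l) = ext (phi g) (ext (phiw w) (c # l))"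
    by (simp only: phiw_Cons_fun ext_comp)
  also have "\<dots> = c # ext (phiw (map G (g # w))) l @ (ext (phi (G g)) t @ t')"
    using t t' by (simp only: list.map phiw_Cons_fun ext_comp) simp
  finally show ?case by blast
qed

lemma aux_ab: "B0 # ext (phi Ga) l = ext (phi Gb) l @ [B0]"
proof (induct l)
  case (Cons c l) then show ?case by (cases c) auto
qed simp
lemma aux_alpha_beta: "B1 # ext (phi Galpha) l = ext (phi Gbeta) l @ [B1]"
proof (induct l)
  case (Cons c l) then show ?case by (cases c) auto
qed simp

lemma step1: "g \<in> {Ga, Galpha, Gbeta} \<Longrightarrow> \<exists>t. ext (phi g) (B1 # l) = B1 # ext (phi (H g)) l @ t"
  using aux_ab[of l] by auto
lemma step0: "g \<in> {Ga, Gb, Galpha} \<Longrightarrow> \<exists>t. ext (phi g) (B0 # l) = B0 # ext (phi (F g)) l @ t"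
  using aux_alpha_beta[of l] by auto

lemma hd_ext: "l \<noteq> [] \<Longrightarrow> hd (ext (phi g) l) = hd (phi g (hd l))"
  by (cases l) auto

lemma hd_abeta: "set w \<subseteq> {Ga, Gbeta} \<Longrightarrow> hd (phiw w d) = (if Gbeta \<in> set w then B1 else d)"
proof (induct w)
  case (Cons g w)
  then show ?case using hd_ext[of "phiw w d" g] by (cases "hd (phiw w d)"; auto)
qed simp


lemma hd_bal: "set w \<subseteq> {Gb, Galpha} \<Longrightarrow> hd (phiw w d) = (if Gb \<in> set w then B0 else d)"
proof (induct w)
  case (Cons g w)
  then show ?case using hd_ext[of "phiw w d" g] by (cases "hd (phiw w d)"; auto)
qed simp

definition LS :: "(nat \<Rightarrow> bin) \<Rightarrow> bin list \<Rightarrow> bool" where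
  "LS x w \<longleftrightarrow> fac x (B0 # w) \<and> fac x (B1 # w)"

fun decb :: "bin list \<Rightarrow> bin list" where
  "decb [] = []"
| "decb [B0] = []"
| "decb (B0 # B1 # r) = B1 # decb r"
| "decb (B0 # B0 # r) = B0 # decb (B0 # r)"
| "decb (B1 # r) = decb r"

lemma decb_le: "length (decb w) \<le> length w"
  by (induct w rule: decb.induct) auto
lemma decb_len: "w \<noteq> [] \<Longrightarrow> length (decb w) < length w"
  by (induct w rule: decb.induct) (auto simp: less_Suc_eq_le decb_le)

lemma ext_b_hd: "ext (phi Gb) f \<noteq> [] \<Longrightarrow> hd (ext (phi Gb) f) = B0"
  by (cases f) (auto, metis bin.exhaust phi.simps(3,4) list.sel(1))

lemma decb_prefix:
  "prefix w (ext (phi Gb) f) \<Longrightarrow> prefix (decb w) f \<and> prefix w (ext (phi Gb) (decb w) @ [B0])"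
proof (induct f arbitrary: w)
  case Nil then show ?case by simp
next
  case (Cons c f)
  show ?case
  proof (cases c)
    case B0
    then have p: "prefix w (B0 # ext (phi Gb) f)" using Cons.prems by simp
    show ?thesis
    proof (cases w)
      case Nil then show ?thesis by simp
    next
      case (Cons a w1)
      then have a: "a = B0" and w1: "prefix w1 (ext (phi Gb) f)" using p by auto
      show ?thesis
      proof (cases w1)
        case Nil then show ?thesis using Cons a by simp
      next
        case (Cons b w2)
        then have "b = B0" using w1 ext_b_hd[of f] by (cases "ext (phi Gb) f") auto
        then have "decb w = B0 # decb w1" using Cons \<open>w = a # w1\<close> a by simp
        then show ?thesis using Cons.hyps[OF w1] B0 \<open>w = a # w1\<close> a by simp
      qed
    qed
  next
    case B1
    then have p: "prefix w (B0 # B1 # ext (phi Gb) f)" using Cons.prems by simp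
    show ?thesis
    proof (cases w)
      case Nil then show ?thesis by simp
    next
      case (Cons a w1)
      show ?thesis
      proof (cases w1)
        case Nil then show ?thesis using Cons p by simp
      next
        case (Cons b w2)
        then have "a = B0" "b = B1" "prefix w2 (ext (phi Gb) f)" using p \<open>w = a # w1\<close> by auto
        then show ?thesis using Cons.hyps[of w2] B1 \<open>w = a # w1\<close> Cons by simp
      qed
    qed
  qed
qed

lemma pos_facts:
  assumes x: "x = inf_img (phi Gb) y"
  defines "pos \<equiv> \<lambda>j. length (ext (phi Gb) (pref y j))"
  shows "pos (Suc j) = pos j + length (phi Gb (y j))"
    and "x (pos j) = B0"
    and "y j = B1 \<Longrightarrow> x (Suc (pos j)) = B1"
    and "\<exists>j. pos j = i \<or> (Suc (pos j) = i \<and> y j = B1)"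
    and "L \<le> length (ext (phi Gb) (map (\<lambda>t. y (a + t)) [0..<L]))"
    and "i < length (ext (phi Gb) (map (\<lambda>t. y (a + t)) [0..<L])) \<Longrightarrow> x (pos a + i) = ext (phi Gb) (map (\<lambda>t. y (a + t)) [0..<L]) ! i"
proof -
  show ps: "pos (Suc j) = pos j + length (phi Gb (y j))" for j unfolding pos_def by (simp add: pref_Suc)
  have pf: "pfx (ext (phi Gb) (pref y n)) x" for n unfolding x by (rule img_pfx) simp
  have e: "ext (phi Gb) (pref y (Suc j)) = ext (phi Gb) (pref y j) @ phi Gb (y j)" for j by (simp add: pref_Suc)
  show "x (pos j) = B0" using pf[of "Suc j"] unfolding e pfx_def pos_def
    by (cases "y j") (auto simp: nth_append)
  show "y j = B1 \<Longrightarrow> x (Suc (pos j)) = B1" using pf[of "Suc j"] unfolding e pfx_def pos_def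
    by (auto simp: nth_append)
  show "\<exists>j. pos j = i \<or> (Suc (pos j) = i \<and> y j = B1)"
  proof (induct i)
    case 0 then show ?case by (rule exI[of _ 0]) (simp add: pos_def pref_def)
  next
    case (Suc i)
    then obtain j where j: "pos j = i \<or> (Suc (pos j) = i \<and> y j = B1)" by blast
    show ?case
    proof (cases "pos j = i")
      case True
      then show ?thesis using ps[of j] by (cases "y j") auto
    next
      case False
      then show ?thesis using j ps[of j] by (intro exI[of _ "Suc j"]) auto
    qed
  qed
  show "L \<le> length (ext (phi Gb) (map (\<lambda>t. y (a + t)) [0..<L]))"
    using ext_len[of "phi Gb" "map (\<lambda>t. y (a + t)) [0..<L]"] by simp
  assume i: "i < length (ext (phi Gb) (map (\<lambda>t. y (a + t)) [0..<L]))"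
  have "ext (phi Gb) (pref y (a + L)) = ext (phi Gb) (pref y a) @ ext (phi Gb) (map (\<lambda>t. y (a + t)) [0..<L])"
    by (simp add: pref_add)
  then show "x (pos a + i) = ext (phi Gb) (map (\<lambda>t. y (a + t)) [0..<L]) ! i"
    using pf[of "a + L"] i unfolding pfx_def pos_def by (auto simp: nth_append)
qed


lemma prefix_pfx: "prefix w Z \<Longrightarrow> pfx Z x \<Longrightarrow> pfx w x"
proof -
  assume a: "prefix w Z" "pfx Z x"
  then obtain r where "Z = w @ r" by (auto simp: prefix_def)
  then show ?thesis using a(2) by (auto simp: pfx_def nth_append)
qed

lemma prefix_by_nth: "length w \<le> length Z \<Longrightarrow> (\<And>t. t < length w \<Longrightarrow> w ! t = Z ! t) \<Longrightarrow> prefix w Z"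
proof -
  assume a: "length w \<le> length Z" "\<And>t. t < length w \<Longrightarrow> w ! t = Z ! t"
  have "take (length w) Z = w" by (rule nth_equalityI) (use a in auto)
  then show ?thesis using take_is_prefix by metis
qed

lemma back_b:
  assumes x: "x = inf_img (phi Gb) y" and ls: "LS x w" and ne: "w \<noteq> []"
  shows "\<exists>w'. LS y w' \<and> length w' < length w \<and> (pfx w' y \<longrightarrow> pfx w x)"
proof -
  define pos where "pos j = length (ext (phi Gb) (pref y j))" for j
  note PF = pos_facts[OF x, folded pos_def]
  let ?L = "length w"
  let ?Z = "\<lambda>a. ext (phi Gb) (map (\<lambda>t. y (a + t)) [0..<?L])"
  have keyZ: "prefix w (?Z a)"
    if h: "\<And>t. t < ?L \<Longrightarrow> x (pos a + t) = w ! t" for a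
    by (rule prefix_by_nth) (use PF(5)[of ?L a] PF(6)[of _ a ?L] h in auto)
  have key: "prefix (decb w) (map (\<lambda>t. y (a + t)) [0..<?L])"
    if h: "\<And>t. t < ?L \<Longrightarrow> x (pos a + t) = w ! t" for a
    using decb_prefix keyZ[OF h] by blast
  have fy: "fac y (c # decb w)" if yc: "y j = c" and h: "\<And>t. t < ?L \<Longrightarrow> x (pos (Suc j) + t) = w ! t" for c j
  proof -
    have "prefix (decb w) (map (\<lambda>t. y (Suc j + t)) [0..<?L])" using key h by blast
    then obtain r where r: "map (\<lambda>t. y (Suc j + t)) [0..<?L] = decb w @ r" by (auto simp: prefix_def)
    have "y (Suc j + t) = decb w ! t" if t: "t < length (decb w)" for t
    proof -
      have tl: "t < ?L" using t decb_le[of w] by simp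
      have "map (\<lambda>t. y (Suc j + t)) [0..<?L] ! t = (decb w @ r) ! t" using r by simp
      then show ?thesis using t tl by (simp add: nth_append)
    qed
    then have "\<forall>t<length (decb w). y (Suc j + t) = decb w ! t" by blast
    then show ?thesis unfolding fac_def using yc
      by (intro exI[of _ j]) (auto simp: nth_Cons split: nat.split)
  qed
  obtain i where i: "x i = B1" "\<And>t. t < ?L \<Longrightarrow> x (i + Suc t) = w ! t"
    using ls unfolding LS_def fac_def by fastforce
  obtain j where j: "pos j = i \<or> (Suc (pos j) = i \<and> y j = B1)" using PF(4) by blast
  then have j': "Suc (pos j) = i" "y j = B1" using i(1) PF(2)[of j] by auto
  then have pj: "pos (Suc j) = Suc i" using PF(1)[of j] by simp
  have h1: "\<And>t. t < ?L \<Longrightarrow> x (pos (Suc j) + t) = w ! t" using i(2) pj by simp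
  have w0: "w ! 0 = B0" using h1[of 0] PF(2)[of "Suc j"] ne by simp
  obtain i' where i': "x i' = B0" "\<And>t. t < ?L \<Longrightarrow> x (i' + Suc t) = w ! t"
    using ls unfolding LS_def fac_def by fastforce
  obtain j2 where j2: "pos j2 = i' \<or> (Suc (pos j2) = i' \<and> y j2 = B1)" using PF(4) by blast
  then have j2': "pos j2 = i'" using i'(1) PF(3)[of j2] by auto
  have "x (Suc i') = B0" using i'(2)[of 0] w0 ne by simp
  then have "y j2 = B0" using PF(3)[of j2] j2' by (cases "y j2") auto
  then have pj2: "pos (Suc j2) = Suc i'" using PF(1)[of j2] j2' by simp
  have h2: "\<And>t. t < ?L \<Longrightarrow> x (pos (Suc j2) + t) = w ! t" using i'(2) pj2 by simp
  have LSy: "LS y (decb w)" unfolding LS_def using fy[OF \<open>y j2 = B0\<close> h2] fy[OF j'(2) h1] by simp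
  have "pfx w x" if p: "pfx (decb w) y"
  proof -
    let ?m = "length (decb w)"
    have dm: "decb w = pref y ?m" using p pfx_pref by blast
    have e1: "prefix w (ext (phi Gb) (decb w) @ [B0])" using decb_prefix keyZ[OF h1] by blast
    have e2: "ext (phi Gb) (decb w) = ext (phi Gb) (pref y ?m)" using dm by (rule arg_cong)
    have pw: "prefix w (ext (phi Gb) (pref y ?m) @ [B0])" using e1 unfolding e2 .
    have "pfx (ext (phi Gb) (pref y (Suc ?m))) x" unfolding x by (rule img_pfx) simp
    moreover have "prefix (ext (phi Gb) (pref y ?m) @ [B0]) (ext (phi Gb) (pref y (Suc ?m)))"
      by (cases "y ?m") (auto simp: pref_Suc)
    ultimately show ?thesis using pw prefix_pfx prefix_order.trans by blast
  qed
  then show ?thesis using LSy decb_len[OF ne] by blast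
qed


lemma pfx_fac: "pfx (A @ B @ C) x \<Longrightarrow> fac x B"
  unfolding pfx_def fac_def
  by (intro exI[of _ "length A"]) (auto, metis add_less_cancel_left length_append nth_append_length_plus nth_append trans_less_add1)

lemma fac_prefix: "fac x (c # w) \<Longrightarrow> prefix w' w \<Longrightarrow> fac x (c # w')"
proof -
  assume a: "fac x (c # w)" "prefix w' w"
  then obtain r where r: "w = w' @ r" by (auto simp: prefix_def)
  obtain k where k: "\<forall>i<length (c # w). x (k + i) = (c # w) ! i" using a(1) unfolding fac_def by blast
  have "\<forall>i<length (c # w'). x (k + i) = (c # w') ! i"
  proof (intro allI impI)
    fix i assume i: "i < length (c # w')"
    have "x (k + i) = ((c # w') @ r) ! i" using k i r by simp
    then show "x (k + i) = (c # w') ! i" using i by (simp only: nth_append) simp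
  qed
  then show ?thesis unfolding fac_def by blast
qed

lemma LS_prefix: "LS x w \<Longrightarrow> prefix w' w \<Longrightarrow> LS x w'"
  unfolding LS_def using fac_prefix[of x B0 w w'] fac_prefix[of x B1 w w'] by simp

lemma phi_b_last: "\<exists>p. phi Gb c = p @ [c]" by (cases c) auto
lemma phi_b_first: "\<exists>q. phi Gb c = B0 # q" by (cases c) auto

lemma fwd_b:
  assumes x: "x = inf_img (phi Gb) y" and ls: "LS y (pref y n)"
  shows "LS x (pref x (Suc n))"
proof -
  let ?P = "ext (phi Gb) (pref y n) @ [B0]"
  have pf: "pfx (ext (phi Gb) (pref y m)) x" for m unfolding x by (rule img_pfx) simp
  obtain q where q: "phi Gb (y n) = B0 # q" using phi_b_first by blast
  have "prefix ?P (ext (phi Gb) (pref y (Suc n)))" using q by (simp add: pref_Suc)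
  then have pP: "pfx ?P x" using pf[of "Suc n"] prefix_pfx by blast
  have fc: "fac x (c # ?P)" if fy0: "fac y (c # pref y n)" for c
  proof -
    obtain k where k0: "\<forall>i<length (c # pref y n). y (k + i) = (c # pref y n) ! i" using fy0 unfolding fac_def by blast
    have k: "\<And>i. i < Suc n \<Longrightarrow> y (k + i) = (c # pref y n) ! i" using k0 by simp
    have sub: "map (\<lambda>t. y (k + t)) [0..<Suc n + 1] = c # pref y n @ [y (k + Suc n)]"
    proof (rule nth_equalityI)
      fix i assume "i < length (map (\<lambda>t. y (k + t)) [0..<Suc n + 1])"
      then show "map (\<lambda>t. y (k + t)) [0..<Suc n + 1] ! i = (c # pref y n @ [y (k + Suc n)]) ! i"
        using k[of i] by (cases "i \<le> n") (auto simp: nth_append nth_Cons' less_Suc_eq)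
    qed simp
    obtain p where p: "phi Gb c = p @ [c]" using phi_b_last by blast
    obtain q where q: "phi Gb (y (k + Suc n)) = B0 # q" using phi_b_first by blast
    have "ext (phi Gb) (pref y (k + (Suc n + 1))) = (ext (phi Gb) (pref y k) @ p) @ (c # ?P) @ q"
      unfolding pref_add sub using p q by simp
    then show ?thesis using pf[of "k + (Suc n + 1)"] pfx_fac by metis
  qed
  have "LS x ?P" using ls fc unfolding LS_def by blast
  moreover have "length ?P \<ge> Suc n" using ext_len[of "phi Gb" "pref y n"] by simp
  then have "prefix (pref x (Suc n)) ?P" using pP pfx_pref
    by (metis prefix_def append_take_drop_id take_map pref_def take_upt add_0 min.absorb2 length_map length_upt diff_zero)
  ultimately show ?thesis using LS_prefix by blast
qed

fun sw :: "bin \<Rightarrow> bin" where "sw B0 = B1" | "sw B1 = B0"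
lemma sw_sw[simp]: "sw (sw c) = c" by (cases c) auto
lemma map_sw_sw[simp]: "map sw (map sw w) = w" by (induct w) auto
lemma sw_comp_sw[simp]: "sw \<circ> (sw \<circ> x) = x" by auto

lemma ext_sw: "map sw (ext (phi Gbeta) l) = ext (phi Gb) (map sw l)"
proof (induct l)
  case (Cons c l) then show ?case by (cases c) auto
qed simp

lemma pref_sw: "pref (sw \<circ> y) n = map sw (pref y n)" by (simp add: pref_def)

lemma img_sw: "x = inf_img (phi Gbeta) y \<Longrightarrow> sw \<circ> x = inf_img (phi Gb) (sw \<circ> y)"
proof (rule img_unique, simp)
  fix n assume x: "x = inf_img (phi Gbeta) y"
  have "pfx (ext (phi Gbeta) (pref y n)) x" unfolding x by (rule img_pfx) simp
  then show "pfx (ext (phi Gb) (pref (sw \<circ> y) n)) (sw \<circ> x)"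
    unfolding pref_sw ext_sw[symmetric] pfx_def by simp
qed

lemma sw_eq: "(sw a = sw b) = (a = b)" by (cases a; cases b) auto
lemma fac_sw: "fac (sw \<circ> x) (map sw w) = fac x w"
  unfolding fac_def by (simp add: sw_eq)
lemma pfx_sw: "pfx (map sw w) (sw \<circ> x) = pfx w x"
  unfolding pfx_def by (simp add: sw_eq)

lemma LS_sw: "LS (sw \<circ> x) (map sw w) = LS x w"
  unfolding LS_def using fac_sw[of x "B0 # w"] fac_sw[of x "B1 # w"] by auto

lemma core:
  assumes desub: "\<And>x. x \<in> K \<Longrightarrow> \<exists>y\<in>K. x = inf_img (phi Gb) y \<or> sw \<circ> x = inf_img (phi Gb) (sw \<circ> y)"
    and both: "\<And>x. x \<in> K \<Longrightarrow> LS x []"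
  shows "x \<in> K \<Longrightarrow> LS x (pref x n)"
proof (induct n arbitrary: x)
  case 0 then show ?case using both by (simp add: pref_def)
next
  case (Suc n)
  obtain y where y: "y \<in> K" "x = inf_img (phi Gb) y \<or> sw \<circ> x = inf_img (phi Gb) (sw \<circ> y)"
    using desub Suc.prems by blast
  have ly: "LS y (pref y n)" using Suc.hyps y(1) by blast
  show ?case
  proof (cases "x = inf_img (phi Gb) y")
    case True then show ?thesis using fwd_b ly by blast
  next
    case False
    then have e: "sw \<circ> x = inf_img (phi Gb) (sw \<circ> y)" using y by blast
    have "LS (sw \<circ> y) (pref (sw \<circ> y) n)" using ly LS_sw pref_sw by metis
    then have "LS (sw \<circ> x) (pref (sw \<circ> x) (Suc n))" using fwd_b[OF e] by blast
    then show ?thesis using LS_sw pref_sw by metis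
  qed
qed

lemma core2:
  assumes desub: "\<And>x. x \<in> K \<Longrightarrow> \<exists>y\<in>K. x = inf_img (phi Gb) y \<or> sw \<circ> x = inf_img (phi Gb) (sw \<circ> y)"
  shows "x \<in> K \<Longrightarrow> LS x w \<Longrightarrow> pfx w x"
proof (induct "length w" arbitrary: x w rule: less_induct)
  case less
  show ?case
  proof (cases "w = []")
    case True then show ?thesis by (simp add: pfx_def)
  next
    case ne: False
    obtain y where y: "y \<in> K" "x = inf_img (phi Gb) y \<or> sw \<circ> x = inf_img (phi Gb) (sw \<circ> y)"
      using desub less.prems by blast
    show ?thesis
    proof (cases "x = inf_img (phi Gb) y")
      case True
      then obtain w' where w': "LS y w'" "length w' < length w" "pfx w' y \<longrightarrow> pfx w x"
        using back_b less.prems ne by blast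
      then show ?thesis using less.hyps y(1) by blast
    next
      case False
      then have e: "sw \<circ> x = inf_img (phi Gb) (sw \<circ> y)" using y by blast
      have "LS (sw \<circ> x) (map sw w)" using less.prems LS_sw by blast
      then obtain w' where w': "LS (sw \<circ> y) w'" "length w' < length w" "pfx w' (sw \<circ> y) \<longrightarrow> pfx (map sw w) (sw \<circ> x)"
        using back_b[OF e] ne by fastforce
      have "LS y (map sw w')" using w'(1) LS_sw by (metis map_sw_sw)
      then have "pfx (map sw w') y" using less.hyps[of "map sw w'" y] w'(2) y(1) by simp
      then have "pfx w' (sw \<circ> y)" using pfx_sw by (metis map_sw_sw)
      then show ?thesis using w'(3) pfx_sw by blast
    qed
  qed
qed


lemma factors_eq: "factors x n = {w. length w = n \<and> fac x w}"
proof (rule set_eqI, rule iffI)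
  fix w assume "w \<in> factors x n"
  then obtain k where k: "w = map (\<lambda>i. x (i + k)) [0..<n]" unfolding factors_def by auto
  then have "\<forall>i<length w. x (k + i) = w ! i" by (simp add: add.commute)
  then show "w \<in> {w. length w = n \<and> fac x w}" using k unfolding fac_def by auto
next
  fix w assume "w \<in> {w. length w = n \<and> fac x w}"
  then obtain k where k: "length w = n" "\<forall>i<length w. x (k + i) = w ! i" unfolding fac_def by auto
  then have "w = map (\<lambda>i. x (i + k)) [0..<n]" by (intro nth_equalityI) (auto simp: add.commute)
  then show "w \<in> factors x n" unfolding factors_def by auto
qed

lemma UNIV_bin: "(UNIV :: bin set) = {B0, B1}" by (auto intro: bin.exhaust)

lemma fin_len: "finite {w :: bin list. length w = n \<and> P w}"
proof -
  have "finite {w :: bin list. set w \<subseteq> UNIV \<and> length w = n}"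
    by (rule finite_lists_length_eq) (simp add: UNIV_bin)
  then show ?thesis by (rule rev_finite_subset) auto
qed

lemma count_step:
  assumes ls: "\<And>n. LS x (pref x n)" and un: "\<And>w. LS x w \<Longrightarrow> pfx w x"
  shows "card {w. length w = Suc n \<and> fac x w} = card {w. length w = n \<and> fac x w} + 1"
proof -
  define A where "A c = {w. length w = n \<and> fac x (c # w)}" for c
  have split: "{w. length w = Suc n \<and> fac x w} = Cons B0 ` A B0 \<union> Cons B1 ` A B1"
  proof (rule set_eqI, rule iffI)
    fix w assume "w \<in> {w. length w = Suc n \<and> fac x w}"
    then obtain c r where "w = c # r" "length r = n" "fac x (c # r)" by (cases w) auto
    then show "w \<in> Cons B0 ` A B0 \<union> Cons B1 ` A B1" unfolding A_def by (cases c) auto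
  qed (auto simp: A_def)
  have fin: "finite (A c)" for c unfolding A_def by (rule fin_len)
  have c1: "card {w. length w = Suc n \<and> fac x w} = card (A B0) + card (A B1)"
    unfolding split by (subst card_Un_disjoint) (auto simp: fin card_image)
  have facw: "fac x (c # w) \<Longrightarrow> fac x w" for c w
    unfolding fac_def by (auto, metis add_Suc_right add_Suc Suc_less_eq nth_Cons_Suc)
  have U: "A B0 \<union> A B1 = {w. length w = n \<and> fac x w}"
  proof (rule set_eqI, rule iffI)
    fix w assume w: "w \<in> {w. length w = n \<and> fac x w}"
    then obtain k where k: "\<forall>i<length w. x (k + i) = w ! i" unfolding fac_def by auto
    show "w \<in> A B0 \<union> A B1"
    proof (cases k)
      case 0
      then have "pfx w x" using k unfolding pfx_def by simp
      then have "w = pref x n" using w pfx_pref by auto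
      then show ?thesis using ls[of n] unfolding A_def LS_def by auto
    next
      case (Suc k')
      then have "fac x (x k' # w)" unfolding fac_def using k
        by (intro exI[of _ k']) (auto simp: nth_Cons split: nat.split)
      then show ?thesis using w unfolding A_def by (cases "x k'") auto
    qed
  qed (auto simp: A_def facw)
  have I: "A B0 \<inter> A B1 = {pref x n}"
  proof
    show "A B0 \<inter> A B1 \<subseteq> {pref x n}" unfolding A_def using un pfx_pref LS_def by fastforce
    show "{pref x n} \<subseteq> A B0 \<inter> A B1" using ls[of n] unfolding A_def LS_def by auto
  qed
  have "card (A B0) + card (A B1) = card (A B0 \<union> A B1) + card (A B0 \<inter> A B1)"
    by (rule card_Un_Int) (auto simp: fin)
  then show ?thesis using c1 U I by simp
qed

lemma sturm_of:
  assumes ls: "\<And>n. LS x (pref x n)" and un: "\<And>w. LS x w \<Longrightarrow> pfx w x"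
  shows "sturmian x"
  unfolding sturmian_def factors_eq
proof
  fix n show "card {w. length w = n \<and> fac x w} = n + 1"
  proof (induct n)
    case 0
    have "{w. length w = 0 \<and> fac x w} = {[]}" by (auto simp: fac_def)
    then show ?case by simp
  next
    case (Suc n) then show ?case using count_step[OF ls un] by simp
  qed
qed

lemma std_of:
  assumes ls: "\<And>n. LS x (pref x n)" and un: "\<And>w. LS x w \<Longrightarrow> pfx w x"
  shows "standard_sturmian x"
proof -
  have eq: "factors (cons_inf c x) n = factors x n" for c n
    unfolding factors_eq
  proof (rule set_eqI, rule iffI)
    fix w assume w: "w \<in> {w. length w = n \<and> fac (cons_inf c x) w}"
    then obtain k where k: "\<forall>i<length w. cons_inf c x (k + i) = w ! i" unfolding fac_def by auto
    show "w \<in> {w. length w = n \<and> fac x w}"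
    proof (cases k)
      case 0
      show ?thesis
      proof (cases w)
        case Nil then show ?thesis using w by (simp add: fac_def)
      next
        case (Cons a r)
        then have "a = c" using k 0 by (auto simp: cons_inf_def)
        have "\<forall>i<length r. x i = r ! i" using k 0 Cons
          by (auto simp: cons_inf_def)
        then have "r = pref x (length r)" using pfx_pref pfx_def by blast
        then have "fac x (c # r)" using ls[of "length r"] unfolding LS_def by (cases c) auto
        then show ?thesis using w Cons \<open>a = c\<close> by simp
      qed
    next
      case (Suc k')
      then show ?thesis using w k unfolding fac_def by (auto simp: cons_inf_def)
    qed
  next
    fix w assume w: "w \<in> {w. length w = n \<and> fac x w}"
    then obtain k where k: "\<forall>i<length w. x (k + i) = w ! i" unfolding fac_def by auto
    then have "\<forall>i<length w. cons_inf c x (Suc k + i) = w ! i" by (simp add: cons_inf_def)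
    then show "w \<in> {w. length w = n \<and> fac (cons_inf c x) w}" using w unfolding fac_def by blast
  qed
  have s: "sturmian x" by (rule sturm_of[OF ls un])
  then show ?thesis unfolding standard_sturmian_def sturmian_def eq by simp
qed


definition KK :: "(nat \<Rightarrow> bin) set" where
  "KK = {x. \<exists>v. set v \<subseteq> {Gb, Gbeta} \<and> full v \<and> fixed_by (phiw v) x}"

lemma KK_desub: "x \<in> KK \<Longrightarrow> \<exists>y\<in>KK. x = inf_img (phi Gb) y \<or> sw \<circ> x = inf_img (phi Gb) (sw \<circ> y)"
proof -
  assume "x \<in> KK"
  then obtain v where v: "set v \<subseteq> {Gb, Gbeta}" "full v" "fixed_by (phiw v) x" unfolding KK_def by auto
  obtain g v' where gv: "v = g # v'" using v(2) unfolding full_def by (cases v) auto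
  define y where "y = inf_img (phiw v') x"
  have xy: "x = inf_img (phi g) y"
    using v(3) unfolding fixed_by_def y_def gv phiw_Cons_fun
    by (subst (asm) img_comp) auto
  have "phiw (v' @ [g]) = (\<lambda>c. ext (phiw v') (phi g c))"
    by (rule ext) (simp add: phiw_append)
  then have "inf_img (phiw (v' @ [g])) y = inf_img (phiw v') (inf_img (phi g) y)" by (simp add: img_comp)
  also have "\<dots> = inf_img (phiw v') x" using xy by simp
  also have "\<dots> = y" by (simp add: y_def)
  finally have "fixed_by (phiw (v' @ [g])) y" unfolding fixed_by_def .
  moreover have "set (v' @ [g]) \<subseteq> {Gb, Gbeta}" "full (v' @ [g])" using v gv unfolding full_def by auto
  ultimately have yK: "y \<in> KK" unfolding KK_def by blast
  have "g = Gb \<or> g = Gbeta" using v gv by auto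
  then show ?thesis using yK xy img_sw by blast
qed

lemma KK_both: "x \<in> KK \<Longrightarrow> LS x []"
proof -
  assume "x \<in> KK"
  then obtain v where v: "full v" "fixed_by (phiw v) x" unfolding KK_def by auto
  have "pfx (ext (phiw v) (pref x 1)) x" using img_pfx[of "phiw v" x 1] v(2) unfolding fixed_by_def by simp
  then have p: "pfx (phiw v (x 0)) x" by (simp add: pref_def)
  have st: "set (phiw v (x 0)) = UNIV" using v(1) phiw_both unfolding full_def by blast
  have "fac x [c]" for c
  proof -
    obtain i where "i < length (phiw v (x 0))" "phiw v (x 0) ! i = c" using st by (metis UNIV_I in_set_conv_nth)
    then have "x i = c" using p unfolding pfx_def by metis
    then have "\<forall>j<length [c]. x (i + j) = [c] ! j" by simp
    then show ?thesis unfolding fac_def by blast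
  qed
  then show ?thesis unfolding LS_def by blast
qed

lemma KK_std: "x \<in> KK \<Longrightarrow> standard_sturmian x"
  using std_of core[OF KK_desub KK_both] core2[OF KK_desub] by blast

theorem lemma26:
  fixes u :: "nat \<Rightarrow> bin" and w :: "gen list"
  assumes prim: "primitive (phiw w)" and subst: "substitution (phiw w)"
    and fixd: "fixed_by (phiw w) u"
  shows "(set w \<subseteq> {Ga, Gbeta} \<longrightarrow>
            standard_sturmian (shift u) \<and> substitution (phiw (map H w))
            \<and> fixed_by (phiw (map H w)) (shift u))
       \<and> (set w \<subseteq> {Gb, Galpha} \<longrightarrow>
            standard_sturmian (shift u) \<and> substitution (phiw (map F w))
            \<and> fixed_by (phiw (map F w)) (shift u))
       \<and> (set w \<subseteq> {Ga, Galpha} \<and> u 0 = B1 \<longrightarrow>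
            substitution (phiw (map H w)) \<and> fixed_by (phiw (map H w)) (shift u))
       \<and> (set w \<subseteq> {Ga, Galpha} \<and> u 0 = B0 \<longrightarrow>
            substitution (phiw (map F w)) \<and> fixed_by (phiw (map F w)) (shift u))"
proof -
  have fw: "full w" using prim by (rule prim_full)
  have fH: "full (map H w)" and fF: "full (map F w)" using fw full_H full_F by auto
  have hdu: "hd (phiw w (u 0)) = u 0" using fixed_hd[OF fixd] by simp
  have fixH: "fixed_by (phiw (map H w)) (shift u)" if s: "set w \<subseteq> {Ga, Galpha, Gbeta}" and u0: "u 0 = B1"
  proof (rule shift_img[OF phiw_ne phiw_ne _ u0 fixd])
    fix l show "\<exists>t. ext (phiw w) (B1 # l) = B1 # ext (phiw (map H w)) l @ t"
      by (rule lift_shift) (use s step1 in blast)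
  qed
  have fixF: "fixed_by (phiw (map F w)) (shift u)" if s: "set w \<subseteq> {Ga, Gb, Galpha}" and u0: "u 0 = B0"
  proof (rule shift_img[OF phiw_ne phiw_ne _ u0 fixd])
    fix l show "\<exists>t. ext (phiw w) (B0 # l) = B0 # ext (phiw (map F w)) l @ t"
      by (rule lift_shift) (use s step0 in blast)
  qed
  have P1: "standard_sturmian (shift u) \<and> substitution (phiw (map H w)) \<and> fixed_by (phiw (map H w)) (shift u)"
    if s: "set w \<subseteq> {Ga, Gbeta}"
  proof -
    obtain g where "g \<in> set w" "phi g B0 \<noteq> [B0]" using fw unfolding full_def by blast
    then have "Gbeta \<in> set w" using s by auto
    then have u0: "u 0 = B1" using hd_abeta[OF s, of "u 0"] hdu by simp
    have fx: "fixed_by (phiw (map H w)) (shift u)" using fixH u0 s by blast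
    have "set (map H w) \<subseteq> {Gb, Gbeta}" using s by auto
    then have "shift u \<in> KK" unfolding KK_def using fH fx by blast
    then show ?thesis using KK_std fx full_subst[OF fH fx] by blast
  qed
  have P2: "standard_sturmian (shift u) \<and> substitution (phiw (map F w)) \<and> fixed_by (phiw (map F w)) (shift u)"
    if s: "set w \<subseteq> {Gb, Galpha}"
  proof -
    obtain g where "g \<in> set w" "phi g B1 \<noteq> [B1]" using fw unfolding full_def by blast
    then have "Gb \<in> set w" using s by auto
    then have u0: "u 0 = B0" using hd_bal[OF s, of "u 0"] hdu by simp
    have fx: "fixed_by (phiw (map F w)) (shift u)" using fixF u0 s by blast
    have "set (map F w) \<subseteq> {Gb, Gbeta}" using s by auto
    then have "shift u \<in> KK" unfolding KK_def using fF fx by blast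
    then show ?thesis using KK_std fx full_subst[OF fF fx] by blast
  qed
  have P3: "substitution (phiw (map H w)) \<and> fixed_by (phiw (map H w)) (shift u)"
    if s: "set w \<subseteq> {Ga, Galpha}" and u0: "u 0 = B1"
  proof -
    have fx: "fixed_by (phiw (map H w)) (shift u)" using fixH u0 s by blast
    then show ?thesis using full_subst[OF fH fx] by blast
  qed
  have P4: "substitution (phiw (map F w)) \<and> fixed_by (phiw (map F w)) (shift u)"
    if s: "set w \<subseteq> {Ga, Galpha}" and u0: "u 0 = B0"
  proof -
    have fx: "fixed_by (phiw (map F w)) (shift u)" using fixF u0 s by blast
    then show ?thesis using full_subst[OF fF fx] by blast
  qed
  show ?thesis using P1 P2 P3 P4 by blast
qed

end
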